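(* Let $h\ge0$ and $u\in\mathscr B_h$. Then $u$ is dominated by $L+h$, i.e. $u(y)-u(x)\le\phi_h(x,y)$ for all $x,y\in E^N$.
   Context: $E=\mathbb R^d$, $d\ge2$; $N$ bodies with masses $m_i>0$; mass inner product $\langle x,y\rangle=\sum_i m_i(x_i,y_i)$ on $E^N$ with norm $\|\cdot\|$; $U(x)=\sum_{i<j}\frac{m_im_j}{|x_i-x_j|}$; $L(x,v)=\frac12\|v\|^2+U(x)$. For $h\ge0$, $A_h(\gamma)=\int_a^b(L(\gamma,\dot\gamma)+h)\,dt$ for absolutely continuous $\gamma:[a,b]\to E^N$, and $\phi_h(x,y)=\inf A_h(\gamma)$ over absolutely continuous curves $\gamma:[0,T]\to E^N$, $T>0$, from $x$ to $y$. $\mathscr B_h$ is the class of all locally uniform limits on $E^N$ of functions $x\mapsto\phi_{h_n}(0,p_n)-\phi_{h_n}(x,p_n)$ with $h_n\ge0$, $h_n\to h$, $p_n\in E^N$, $\|p_n\|\to+\infty$. *)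

theory Defs
  imports "HOL-Analysis.Analysis"
begin

(* Configurations in E^N are x :: real^'d^'n, body i at position x $ i \<in> E = real^'d.
   Masses m :: 'n \<Rightarrow> real. *)

definition mnorm :: "('n::finite \<Rightarrow> real) \<Rightarrow> real^'d^'n \<Rightarrow> real" where
  "mnorm m x = sqrt (\<Sum>i\<in>UNIV. m i * (norm (x $ i))^2)"

(* Newtonian potential sum_{i<j} m_i m_j/|x_i-x_j| (= half the sum over ordered pairs i~=j), +\<infinity> at collisions *)
definition Upot :: "('n::finite \<Rightarrow> real) \<Rightarrow> real^'d^'n \<Rightarrow> ennreal" where
  "Upot m x = (if \<exists>i j. i \<noteq> j \<and> x $ i = x $ j then \<infinity>
     else ennreal ((\<Sum>(i,j)\<in>{(i,j). i \<noteq> j}. m i * m j / dist (x $ i) (x $ j)) / 2))"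

definition Lag :: "('n::finite \<Rightarrow> real) \<Rightarrow> real^'d^'n \<Rightarrow> real^'d^'n \<Rightarrow> ennreal" where
  "Lag m x v = ennreal ((mnorm m v)^2 / 2) + Upot m x"

definition abs_cont_on :: "real \<Rightarrow> real \<Rightarrow> (real \<Rightarrow> 'a::real_normed_vector) \<Rightarrow> bool" where
  "abs_cont_on a b f \<longleftrightarrow> (\<forall>e>0. \<exists>d>0. \<forall>D. finite D \<and> (\<forall>(u,v)\<in>D. a \<le> u \<and> u < v \<and> v \<le> b)
      \<and> disjoint_family_on (\<lambda>(u,v). {u<..<v}) D \<and> (\<Sum>(u,v)\<in>D. v - u) < d
      \<longrightarrow> (\<Sum>(u,v)\<in>D. norm (f v - f u)) < e)"

definition action :: "('n::finite \<Rightarrow> real) \<Rightarrow> real \<Rightarrow> real \<Rightarrow> real \<Rightarrow> (real \<Rightarrow> real^'d^'n) \<Rightarrow> ennreal" where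
  "action m h a b g = (\<integral>\<^sup>+ t\<in>{a..b}. Lag m (g t) (vector_derivative g (at t within {a..b})) + ennreal h \<partial>lborel)"

definition phi :: "('n::finite \<Rightarrow> real) \<Rightarrow> real \<Rightarrow> real^'d^'n \<Rightarrow> real^'d^'n \<Rightarrow> ennreal" where
  "phi m h x y = (INF (T, g) \<in> {(T, g). T > 0 \<and> abs_cont_on 0 T g \<and> g 0 = x \<and> g T = y}. action m h 0 T g)"

definition Bh :: "('n::finite \<Rightarrow> real) \<Rightarrow> real \<Rightarrow> (real^'d^'n \<Rightarrow> real) set" where
  "Bh m h = {u. \<exists>hs :: nat \<Rightarrow> real. \<exists>p :: nat \<Rightarrow> real^'d^'n.
      (\<forall>n. hs n \<ge> 0) \<and> hs \<longlonglongrightarrow> h \<and> filterlim (\<lambda>n. mnorm m (p n)) at_top sequentially \<and>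
      (\<forall>K. compact K \<longrightarrow> (\<forall>e>0. \<forall>\<^sub>F n in sequentially. \<forall>x\<in>K.
          phi m (hs n) 0 (p n) \<noteq> \<infinity> \<and> phi m (hs n) x (p n) \<noteq> \<infinity> \<and>
          \<bar>enn2real (phi m (hs n) 0 (p n)) - enn2real (phi m (hs n) x (p n)) - u x\<bar> < e))}"

end

theory Submission imports Defs begin


lemma nn_integral_le_by_meas:
  assumes "\<And>g. g \<in> borel_measurable M \<Longrightarrow> (\<And>x. g x \<le> f x) \<Longrightarrow> integral\<^sup>N M g \<le> B"
  shows "integral\<^sup>N M f \<le> B"
  unfolding nn_integral_def[of M f]
proof (rule SUP_least)
  fix g assume "g \<in> {g. simple_function M g \<and> g \<le> f}"
  then have s: "simple_function M g" and le: "g \<le> f" by auto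
  have "integral\<^sup>S M g = integral\<^sup>N M g" using nn_integral_eq_simple_integral[OF s] by simp
  also have "\<dots> \<le> B" using assms[of g] borel_measurable_simple_function[OF s] le by (auto simp: le_fun_def)
  finally show "integral\<^sup>S M g \<le> B" .
qed

lemma le_add_INF_ennreal:
  fixes x a :: ennreal
  assumes "\<And>i. i \<in> S \<Longrightarrow> x \<le> a + f i"
  shows "x \<le> a + (INF i\<in>S. f i)"
proof (cases "(INF i\<in>S. f i) = \<infinity>")
  case True then show ?thesis by simp
next
  case False
  show ?thesis
  proof (rule ennreal_le_epsilon)
    fix e :: real assume e: "0 < e"
    have "(INF i\<in>S. f i) < (INF i\<in>S. f i) + ennreal e"
      using False e by (simp add: ennreal_add_left_cancel_less top.not_eq_extremum)
    then obtain i where i: "i \<in> S" "f i < (INF i\<in>S. f i) + ennreal e"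
      by (auto simp: INF_less_iff)
    have "x \<le> a + f i" using assms i by auto
    also have "\<dots> \<le> a + (INF i\<in>S. f i) + ennreal e" using i by (simp add: add.assoc add_left_mono less_imp_le)
    finally show "x \<le> a + (INF i\<in>S. f i) + ennreal e" .
  qed
qed

lemma vd_local:
  assumes "open S" "t \<in> S" "\<And>s. s \<in> S \<Longrightarrow> f s = g s"
  shows "vector_derivative f (at t) = vector_derivative g (at t)"
proof -
  have "\<And>f'. (f has_vector_derivative f') (at t) \<longleftrightarrow> (g has_vector_derivative f') (at t)"
    using has_vector_derivative_transform_within_open[OF _ assms(1,2)] assms(3) by metis
  then show ?thesis unfolding vector_derivative_def by simp
qed

lemma vd_shift:
  fixes g :: "real \<Rightarrow> 'a::real_normed_vector"
  shows "vector_derivative (\<lambda>t. g (t - c)) (at t) = vector_derivative g (at (t - c))"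
proof -
  have d1: "((\<lambda>t. t - c) has_vector_derivative 1) (at s)" for s
    by (auto intro!: derivative_eq_intros)
  have d2: "((\<lambda>t. t + c) has_vector_derivative 1) (at s)" for s
    by (auto intro!: derivative_eq_intros)
  have "(g has_vector_derivative f') (at (t - c)) \<longleftrightarrow> ((\<lambda>t. g (t - c)) has_vector_derivative f') (at t)" for f'
  proof
    assume "(g has_vector_derivative f') (at (t - c))"
    from vector_diff_chain_at[OF d1 this] show "((\<lambda>t. g (t - c)) has_vector_derivative f') (at t)"
      by (simp add: o_def)
  next
    assume a: "((\<lambda>t. g (t - c)) has_vector_derivative f') (at t)"
    have "((\<lambda>t. g (t - c)) has_vector_derivative f') (at ((t - c) + c))" using a by simp
    from vector_diff_chain_at[OF d2 this] show "(g has_vector_derivative f') (at (t - c))"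
      by (simp add: o_def)
  qed
  then show ?thesis unfolding vector_derivative_def by simp
qed



definition adm :: "real \<Rightarrow> real \<Rightarrow> real \<Rightarrow> (real \<times> real) set \<Rightarrow> bool" where
  "adm a b d D \<longleftrightarrow> finite D \<and> (\<forall>p\<in>D. a \<le> fst p \<and> fst p < snd p \<and> snd p \<le> b)
      \<and> disjoint_family_on (\<lambda>p. {fst p<..<snd p}) D \<and> (\<Sum>p\<in>D. snd p - fst p) < d"

lemma abs_cont_alt:
  "abs_cont_on a b f \<longleftrightarrow> (\<forall>e>0. \<exists>d>0. \<forall>D. adm a b d D
      \<longrightarrow> (\<Sum>p\<in>D. norm (f (snd p) - f (fst p))) < e)"
  unfolding abs_cont_on_def case_prod_unfold adm_def by simp

lemma abs_cont_D:
  assumes "abs_cont_on a b f" "e > 0"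
  obtains d where "d > 0" "\<And>D. adm a b d D \<Longrightarrow> (\<Sum>p\<in>D. norm (f (snd p) - f (fst p))) < e"
  using assms unfolding abs_cont_alt by blast

lemma abs_cont_I:
  assumes "\<And>e. e > 0 \<Longrightarrow> \<exists>d>0. \<forall>D. adm a b d D \<longrightarrow> (\<Sum>p\<in>D. norm (f (snd p) - f (fst p))) < e"
  shows "abs_cont_on a b f"
  using assms unfolding abs_cont_alt by blast

lemma abs_cont_cong:
  assumes "abs_cont_on a b f" "\<And>t. a \<le> t \<Longrightarrow> t \<le> b \<Longrightarrow> f t = g t"
  shows "abs_cont_on a b g"
proof (rule abs_cont_I)
  fix e :: real assume "e > 0"
  then obtain d where d: "d > 0" and H: "\<And>D. adm a b d D \<Longrightarrow> (\<Sum>p\<in>D. norm (f (snd p) - f (fst p))) < e"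
    using abs_cont_D[OF assms(1)] by metis
  show "\<exists>d>0. \<forall>D. adm a b d D \<longrightarrow> (\<Sum>p\<in>D. norm (g (snd p) - g (fst p))) < e"
  proof (intro exI[of _ d] conjI allI impI d)
    fix D assume D: "adm a b d D"
    have "(\<Sum>p\<in>D. norm (g (snd p) - g (fst p))) = (\<Sum>p\<in>D. norm (f (snd p) - f (fst p)))"
      using D assms(2) unfolding adm_def by (intro sum.cong) auto
    then show "(\<Sum>p\<in>D. norm (g (snd p) - g (fst p))) < e" using H[OF D] by simp
  qed
qed

lemma disj_img:
  fixes c :: real and D :: "(real \<times> real) set" and P :: "real \<times> real \<Rightarrow> real \<times> real"
  assumes "disjoint_family_on (\<lambda>p. {fst p<..<snd p}) D"
    and "\<And>p. p \<in> D \<Longrightarrow> {fst (P p)<..<snd (P p)} \<subseteq> (\<lambda>x. x - c) ` {fst p<..<snd p}"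
  shows "disjoint_family_on (\<lambda>p. {fst p<..<snd p}) (P ` D)"
  unfolding disjoint_family_on_def
proof (intro ballI impI)
  fix p' q' assume p'q': "p' \<in> P ` D" "q' \<in> P ` D" "p' \<noteq> q'"
  then obtain p q where pq: "p \<in> D" "q \<in> D" "p' = P p" "q' = P q" by auto
  show "{fst p'<..<snd p'} \<inter> {fst q'<..<snd q'} = {}"
  proof (rule equals0I)
    fix x assume "x \<in> {fst p'<..<snd p'} \<inter> {fst q'<..<snd q'}"
    then have x: "x \<in> {fst (P p)<..<snd (P p)}" "x \<in> {fst (P q)<..<snd (P q)}" using pq by auto
    have "p \<noteq> q" using pq p'q' by auto
    then have e: "{fst p<..<snd p} \<inter> {fst q<..<snd q} = {}" using assms(1) pq unfolding disjoint_family_on_def by auto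
    obtain y where y: "y \<in> {fst p<..<snd p}" "x = y - c" using assms(2)[OF pq(1)] x(1) by auto
    obtain z where z: "z \<in> {fst q<..<snd q}" "x = z - c" using assms(2)[OF pq(2)] x(2) by auto
    have "y = z" using y(2) z(2) by linarith
    then show False using e y z by auto
  qed
qed

lemma abs_cont_shift:
  assumes "abs_cont_on a b f"
  shows "abs_cont_on (a + c) (b + c) (\<lambda>t. f (t - c))"
proof (rule abs_cont_I)
  fix e :: real assume "e > 0"
  then obtain d where d: "d > 0" and H: "\<And>D. adm a b d D \<Longrightarrow> (\<Sum>p\<in>D. norm (f (snd p) - f (fst p))) < e"
    using abs_cont_D[OF assms(1)] by metis
  show "\<exists>d>0. \<forall>D. adm (a + c) (b + c) d D \<longrightarrow> (\<Sum>p\<in>D. norm (f (snd p - c) - f (fst p - c))) < e"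
  proof (intro exI[of _ d] conjI allI impI d)
    fix D assume D: "adm (a + c) (b + c) d D"
    define sh where "sh = (\<lambda>p::real\<times>real. (fst p - c, snd p - c))"
    have inj: "inj_on sh D" unfolding sh_def inj_on_def by (auto simp: prod_eq_iff)
    have "adm a b d (sh ` D)"
      unfolding adm_def
    proof (intro conjI)
      show "finite (sh ` D)" using D by (auto simp: adm_def)
      show "\<forall>p\<in>sh ` D. a \<le> fst p \<and> fst p < snd p \<and> snd p \<le> b" using D by (auto simp: sh_def adm_def)
      show "disjoint_family_on (\<lambda>p. {fst p<..<snd p}) (sh ` D)"
      proof (rule disj_img[where c=c])
        show "disjoint_family_on (\<lambda>p. {fst p<..<snd p}) D" using D by (simp add: adm_def)
        fix p assume "p \<in> D"
        show "{fst (sh p)<..<snd (sh p)} \<subseteq> (\<lambda>x. x - c) ` {fst p<..<snd p}"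
        proof
          fix x assume "x \<in> {fst (sh p)<..<snd (sh p)}"
          then have "x + c \<in> {fst p<..<snd p}" by (auto simp: sh_def)
          then show "x \<in> (\<lambda>x. x - c) ` {fst p<..<snd p}" by (rule image_eqI[rotated]) simp
        qed
      qed
      show "(\<Sum>p\<in>sh ` D. snd p - fst p) < d"
        using D unfolding adm_def by (subst sum.reindex[OF inj]) (simp add: sh_def)
    qed
    from H[OF this] show "(\<Sum>p\<in>D. norm (f (snd p - c) - f (fst p - c))) < e"
      by (subst (asm) sum.reindex[OF inj]) (simp add: sh_def)
  qed
qed

lemma adm_key:
  assumes "adm a c d D" "p \<in> D" "q \<in> D" "x \<in> {fst p<..<snd p}" "x \<in> {fst q<..<snd q}"
  shows "p = q"
proof (rule ccontr)
  assume "p \<noteq> q"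
  then have "{fst p<..<snd p} \<inter> {fst q<..<snd q} = {}" using assms(1-3) unfolding adm_def disjoint_family_on_def by auto
  then show False using assms(4,5) by auto
qed

lemma abs_cont_split:
  assumes "abs_cont_on a b f" "abs_cont_on b c f"
  shows "abs_cont_on a c f"
proof (rule abs_cont_I)
  fix e :: real assume "e > 0"
  then have e2: "e / 2 > 0" by simp
  obtain d1 where d1: "d1 > 0" and H1: "\<And>D. adm a b d1 D \<Longrightarrow> (\<Sum>p\<in>D. norm (f (snd p) - f (fst p))) < e / 2"
    using abs_cont_D[OF assms(1) e2] by metis
  obtain d2 where d2: "d2 > 0" and H2: "\<And>D. adm b c d2 D \<Longrightarrow> (\<Sum>p\<in>D. norm (f (snd p) - f (fst p))) < e / 2"
    using abs_cont_D[OF assms(2) e2] by metis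
  show "\<exists>d>0. \<forall>D. adm a c d D \<longrightarrow> (\<Sum>p\<in>D. norm (f (snd p) - f (fst p))) < e"
  proof (intro exI[of _ "min d1 d2"] conjI allI impI)
    show "min d1 d2 > 0" using d1 d2 by simp
    fix D assume D: "adm a c (min d1 d2) D"
    have fin: "finite D" and bnd: "\<And>p. p \<in> D \<Longrightarrow> a \<le> fst p \<and> fst p < snd p \<and> snd p \<le> c"
      and disj: "disjoint_family_on (\<lambda>p. {fst p<..<snd p}) D"
      and len: "(\<Sum>p\<in>D. snd p - fst p) < min d1 d2"
      using D unfolding adm_def by auto
    define P1 where "P1 = (\<lambda>p::real\<times>real. (fst p, min (snd p) b))"
    define P2 where "P2 = (\<lambda>p::real\<times>real. (max (fst p) b, snd p))"
    define D1 where "D1 = {p\<in>D. fst p < b}"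
    define D2 where "D2 = {p\<in>D. b < snd p}"
    have inj1: "inj_on P1 D1"
    proof (rule inj_onI)
      fix p q assume pq: "p \<in> D1" "q \<in> D1" "P1 p = P1 q"
      then have eq: "fst p = fst q" "min (snd p) b = min (snd q) b" by (auto simp: P1_def)
      have "p \<in> D" "q \<in> D" "fst p < b" "fst q < b" using pq by (auto simp: D1_def)
      moreover have "fst p < snd p" "fst q < snd q" using bnd \<open>p \<in> D\<close> \<open>q \<in> D\<close> by auto
      ultimately show "p = q"
        using adm_key[OF D, of p q "(fst p + min (snd p) b) / 2"] eq by auto
    qed
    have inj2: "inj_on P2 D2"
    proof (rule inj_onI)
      fix p q assume pq: "p \<in> D2" "q \<in> D2" "P2 p = P2 q"
      then have eq: "max (fst p) b = max (fst q) b" "snd p = snd q" by (auto simp: P2_def)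
      have "p \<in> D" "q \<in> D" "b < snd p" "b < snd q" using pq by (auto simp: D2_def)
      moreover have "fst p < snd p" "fst q < snd q" using bnd \<open>p \<in> D\<close> \<open>q \<in> D\<close> by auto
      ultimately show "p = q"
        using adm_key[OF D, of p q "(max (fst p) b + snd p) / 2"] eq by auto
    qed
    have len1: "(\<Sum>p\<in>D1. snd (P1 p) - fst (P1 p)) \<le> (\<Sum>p\<in>D. snd p - fst p)"
    proof -
      have "(\<Sum>p\<in>D1. snd (P1 p) - fst (P1 p)) \<le> (\<Sum>p\<in>D1. snd p - fst p)"
        by (rule sum_mono) (auto simp: P1_def)
      also have "\<dots> \<le> (\<Sum>p\<in>D. snd p - fst p)"
        using fin by (intro sum_mono2) (auto simp: D1_def dest!: bnd)
      finally show ?thesis .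
    qed
    have len2: "(\<Sum>p\<in>D2. snd (P2 p) - fst (P2 p)) \<le> (\<Sum>p\<in>D. snd p - fst p)"
    proof -
      have "(\<Sum>p\<in>D2. snd (P2 p) - fst (P2 p)) \<le> (\<Sum>p\<in>D2. snd p - fst p)"
        by (rule sum_mono) (auto simp: P2_def)
      also have "\<dots> \<le> (\<Sum>p\<in>D. snd p - fst p)"
        using fin by (intro sum_mono2) (auto simp: D2_def dest!: bnd)
      finally show ?thesis .
    qed
    have adm1: "adm a b d1 (P1 ` D1)"
      unfolding adm_def
    proof (intro conjI)
      show "finite (P1 ` D1)" using fin by (simp add: D1_def)
      show "\<forall>p\<in>P1 ` D1. a \<le> fst p \<and> fst p < snd p \<and> snd p \<le> b"
        using bnd by (auto simp: P1_def D1_def)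
      show "disjoint_family_on (\<lambda>p. {fst p<..<snd p}) (P1 ` D1)"
        by (rule disj_img[where c=0]) (use disj in \<open>auto simp: P1_def D1_def disjoint_family_on_def\<close>)
      show "(\<Sum>p\<in>P1 ` D1. snd p - fst p) < d1"
        using len1 len by (subst sum.reindex[OF inj1]) simp
    qed
    have adm2: "adm b c d2 (P2 ` D2)"
      unfolding adm_def
    proof (intro conjI)
      show "finite (P2 ` D2)" using fin by (simp add: D2_def)
      show "\<forall>p\<in>P2 ` D2. b \<le> fst p \<and> fst p < snd p \<and> snd p \<le> c"
        using bnd by (auto simp: P2_def D2_def)
      show "disjoint_family_on (\<lambda>p. {fst p<..<snd p}) (P2 ` D2)"
        by (rule disj_img[where c=0]) (use disj in \<open>auto simp: P2_def D2_def disjoint_family_on_def\<close>)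
      show "(\<Sum>p\<in>P2 ` D2. snd p - fst p) < d2"
        using len2 len by (subst sum.reindex[OF inj2]) simp
    qed
    have "(\<Sum>p\<in>D. norm (f (snd p) - f (fst p))) \<le>
      (\<Sum>p\<in>D. (if fst p < b then norm (f (snd (P1 p)) - f (fst (P1 p))) else 0)
             + (if b < snd p then norm (f (snd (P2 p)) - f (fst (P2 p))) else 0))"
    proof (rule sum_mono)
      fix p assume "p \<in> D"
      then have lt: "fst p < snd p" using bnd by auto
      show "norm (f (snd p) - f (fst p)) \<le> (if fst p < b then norm (f (snd (P1 p)) - f (fst (P1 p))) else 0)
             + (if b < snd p then norm (f (snd (P2 p)) - f (fst (P2 p))) else 0)"
      proof (cases "snd p \<le> b")
        case True then show ?thesis using lt by (simp add: P1_def P2_def)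
      next
        case False
        show ?thesis
        proof (cases "b \<le> fst p")
          case True then show ?thesis using lt False by (simp add: P1_def P2_def)
        next
          case False2: False
          have "f (snd p) - f (fst p) = (f b - f (fst p)) + (f (snd p) - f b)" by simp
          then have "norm (f (snd p) - f (fst p)) \<le> norm (f b - f (fst p)) + norm (f (snd p) - f b)"
            by (metis norm_triangle_ineq)
          then show ?thesis using False False2 by (simp add: P1_def P2_def)
        qed
      qed
    qed
    also have "\<dots> = (\<Sum>p\<in>D1. norm (f (snd (P1 p)) - f (fst (P1 p)))) + (\<Sum>p\<in>D2. norm (f (snd (P2 p)) - f (fst (P2 p))))"
      unfolding sum.distrib D1_def D2_def using fin by (simp add: sum.inter_filter)
    also have "\<dots> = (\<Sum>p\<in>P1 ` D1. norm (f (snd p) - f (fst p))) + (\<Sum>p\<in>P2 ` D2. norm (f (snd p) - f (fst p)))"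
      by (simp add: sum.reindex[OF inj1] sum.reindex[OF inj2])
    also have "\<dots> < e / 2 + e / 2"
      using H1[OF adm1] H2[OF adm2] by linarith
    finally show "(\<Sum>p\<in>D. norm (f (snd p) - f (fst p))) < e" by simp
  qed
qed



lemma abs_cont_concat:
  assumes "abs_cont_on 0 T1 g1" "abs_cont_on 0 T2 g2" "g1 T1 = g2 0"
  shows "abs_cont_on 0 (T1 + T2) (\<lambda>t. if t \<le> T1 then g1 t else g2 (t - T1))"
proof (rule abs_cont_split[where b=T1])
  show "abs_cont_on 0 T1 (\<lambda>t. if t \<le> T1 then g1 t else g2 (t - T1))"
    by (rule abs_cont_cong[OF assms(1)]) simp
  have "abs_cont_on (0 + T1) (T2 + T1) (\<lambda>t. g2 (t - T1))" by (rule abs_cont_shift[OF assms(2)])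
  then have "abs_cont_on T1 (T1 + T2) (\<lambda>t. g2 (t - T1))" by (simp add: add.commute)
  then show "abs_cont_on T1 (T1 + T2) (\<lambda>t. if t \<le> T1 then g1 t else g2 (t - T1))"
    by (rule abs_cont_cong) (use assms(3) in auto)
qed

lemma action_concat:
  fixes g1 g2 :: "real \<Rightarrow> real^'d^'n::finite"
  assumes T1: "T1 > 0" and T2: "T2 > 0"
  shows "action m h 0 (T1 + T2) (\<lambda>t. if t \<le> T1 then g1 t else g2 (t - T1))
    \<le> action m h 0 T1 g1 + action m h 0 T2 g2"
proof -
  define G where "G = (\<lambda>t. if t \<le> T1 then g1 t else g2 (t - T1))"
  define T where "T = T1 + T2"
  define F0 where "F0 = (\<lambda>t. Lag m (G t) (vector_derivative G (at t within {0..T})) + ennreal h)"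
  define F1 where "F1 = (\<lambda>t. Lag m (g1 t) (vector_derivative g1 (at t within {0..T1})) + ennreal h)"
  define F2 where "F2 = (\<lambda>t. Lag m (g2 t) (vector_derivative g2 (at t within {0..T2})) + ennreal h)"
  have E1: "F0 x = F1 x" if "0 < x" "x < T1" for x
  proof -
    have "vector_derivative G (at x within {0..T}) = vector_derivative G (at x)"
      using that T2 by (simp add: at_within_Icc_at T_def)
    also have "\<dots> = vector_derivative g1 (at x)"
      by (rule vd_local[where S="{..<T1}"]) (use that in \<open>auto simp: G_def\<close>)
    also have "\<dots> = vector_derivative g1 (at x within {0..T1})"
      using that by (simp add: at_within_Icc_at)
    finally show ?thesis using that unfolding F0_def F1_def by (simp add: G_def)
  qed
  have E2: "F0 (T1 + y) = F2 y" if "0 < y" "y < T2" for y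
  proof -
    have "vector_derivative G (at (T1 + y) within {0..T}) = vector_derivative G (at (T1 + y))"
      using that T1 by (simp add: at_within_Icc_at T_def)
    also have "\<dots> = vector_derivative (\<lambda>t. g2 (t - T1)) (at (T1 + y))"
      by (rule vd_local[where S="{T1<..}"]) (use that in \<open>auto simp: G_def\<close>)
    also have "\<dots> = vector_derivative g2 (at y)"
      by (simp add: vd_shift)
    also have "\<dots> = vector_derivative g2 (at y within {0..T2})"
      using that by (simp add: at_within_Icc_at)
    finally show ?thesis using that unfolding F0_def F2_def by (simp add: G_def)
  qed
  have "(\<integral>\<^sup>+ t. F0 t * indicator {0..T} t \<partial>lborel) \<le>
     (\<integral>\<^sup>+ t. F1 t * indicator {0..T1} t \<partial>lborel) + (\<integral>\<^sup>+ t. F2 t * indicator {0..T2} t \<partial>lborel)"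
  proof (rule nn_integral_le_by_meas)
    fix s :: "real \<Rightarrow> ennreal" assume s[measurable]: "s \<in> borel_measurable lborel"
      and sle: "\<And>x. s x \<le> F0 x * indicator {0..T} x"
    have sb[measurable]: "s \<in> borel_measurable borel" using s by simp
    have "(\<integral>\<^sup>+ x. s x \<partial>lborel) = (\<integral>\<^sup>+ x. s x * indicator {..T1} x + s x * indicator {T1<..} x \<partial>lborel)"
      by (intro nn_integral_cong) (auto simp: indicator_def)
    also have "\<dots> = (\<integral>\<^sup>+ x. s x * indicator {..T1} x \<partial>lborel) + (\<integral>\<^sup>+ x. s x * indicator {T1<..} x \<partial>lborel)"
      by (rule nn_integral_add) auto
    also have "(\<integral>\<^sup>+ x. s x * indicator {..T1} x \<partial>lborel) \<le> (\<integral>\<^sup>+ t. F1 t * indicator {0..T1} t \<partial>lborel)"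
    proof (rule nn_integral_mono_AE)
      have "AE x in lborel. x \<noteq> 0 \<and> x \<noteq> T1" using AE_lborel_singleton[of 0] AE_lborel_singleton[of T1]
        by eventually_elim auto
      then show "AE x in lborel. s x * indicator {..T1} x \<le> F1 x * indicator {0..T1} x"
      proof eventually_elim
        case (elim x)
        show ?case
        proof (cases "x \<le> T1")
          case True
          show ?thesis
          proof (cases "x < 0")
            case True then show ?thesis using sle[of x] by simp
          next
            case False
            then have "0 < x" "x < T1" using elim \<open>x \<le> T1\<close> by auto
            then show ?thesis using sle[of x] E1[of x] T2 by (simp add: T_def)
          qed
        qed simp
      qed
    qed
    also have "(\<integral>\<^sup>+ x. s x * indicator {T1<..} x \<partial>lborel) = (\<integral>\<^sup>+ y. s (T1 + y) * indicator {T1<..} (T1 + y) \<partial>lborel)"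
      using nn_integral_real_affine[of "\<lambda>x. s x * indicator {T1<..} x" 1 T1] by simp
    also have "\<dots> \<le> (\<integral>\<^sup>+ t. F2 t * indicator {0..T2} t \<partial>lborel)"
    proof (rule nn_integral_mono_AE)
      have "AE x in lborel. x \<noteq> 0 \<and> x \<noteq> T2" using AE_lborel_singleton[of 0] AE_lborel_singleton[of T2]
        by eventually_elim auto
      then show "AE y in lborel. s (T1 + y) * indicator {T1<..} (T1 + y) \<le> F2 y * indicator {0..T2} y"
      proof eventually_elim
        case (elim y)
        show ?case
        proof (cases "y < 0")
          case True then show ?thesis by simp
        next
          case False
          show ?thesis
          proof (cases "y < T2")
            case True
            then have "0 < y" using elim False by auto
            then show ?thesis using sle[of "T1 + y"] E2[of y] True T1 by (simp add: T_def)
          next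
            case False
            then have "T2 < y" using elim by auto
            then show ?thesis using sle[of "T1 + y"] by (simp add: T_def)
          qed
        qed
      qed
    qed
    finally show "(\<integral>\<^sup>+ x. s x \<partial>lborel) \<le> (\<integral>\<^sup>+ t. F1 t * indicator {0..T1} t \<partial>lborel) + (\<integral>\<^sup>+ t. F2 t * indicator {0..T2} t \<partial>lborel)"
      by (simp add: add_mono)
  qed
  then show ?thesis unfolding action_def F0_def F1_def F2_def G_def T_def .
qed


lemma action_h_bound:
  fixes g :: "real \<Rightarrow> real^'d^'n::finite"
  assumes "h \<ge> 0" "h' \<ge> 0" "T \<ge> 0"
  shows "action m h' 0 T g \<le> action m h 0 T g + ennreal (\<bar>h' - h\<bar> * T)"
proof -
  define L0 where "L0 = (\<lambda>t. Lag m (g t) (vector_derivative g (at t within {0..T})))"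
  have hh: "ennreal h' \<le> ennreal h + ennreal \<bar>h' - h\<bar>"
    using assms(1,2) by (smt (verit) ennreal_le_iff ennreal_plus)
  have "(\<integral>\<^sup>+ t. (L0 t + ennreal h') * indicator {0..T} t \<partial>lborel)
      \<le> (\<integral>\<^sup>+ t. (L0 t + ennreal h) * indicator {0..T} t \<partial>lborel) + ennreal (\<bar>h' - h\<bar> * T)"
  proof (rule nn_integral_le_by_meas)
    fix s :: "real \<Rightarrow> ennreal" assume s[measurable]: "s \<in> borel_measurable lborel"
      and sle: "\<And>x. s x \<le> (L0 x + ennreal h') * indicator {0..T} x"
    define c where "c = (\<lambda>t. ennreal \<bar>h' - h\<bar> * indicator {0..T} t)"
    have cm[measurable]: "c \<in> borel_measurable lborel" unfolding c_def by measurable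
    have "(\<integral>\<^sup>+ x. s x \<partial>lborel) \<le> (\<integral>\<^sup>+ x. (s x - c x) + c x \<partial>lborel)"
      by (rule nn_integral_mono) (use diff_add_self_ennreal in auto)
    also have "\<dots> = (\<integral>\<^sup>+ x. s x - c x \<partial>lborel) + (\<integral>\<^sup>+ x. c x \<partial>lborel)"
      by (rule nn_integral_add) auto
    also have "(\<integral>\<^sup>+ x. s x - c x \<partial>lborel) \<le> (\<integral>\<^sup>+ t. (L0 t + ennreal h) * indicator {0..T} t \<partial>lborel)"
    proof (rule nn_integral_mono)
      fix x
      show "s x - c x \<le> (L0 x + ennreal h) * indicator {0..T} x"
      proof (cases "x \<in> {0..T}")
        case True
        then have "s x \<le> (L0 x + ennreal h) + c x" using sle[of x] hh
          by (simp add: c_def add.assoc) (metis add_left_mono order_trans)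
        then show ?thesis using True by (simp add: ennreal_minus_le_iff add.commute c_def)
      next
        case False then show ?thesis using sle[of x] by simp
      qed
    qed
    also have "(\<integral>\<^sup>+ x. c x \<partial>lborel) = ennreal (\<bar>h' - h\<bar> * T)"
      unfolding c_def using assms(3) by (simp add: nn_integral_cmult_indicator ennreal_mult)
    finally show "(\<integral>\<^sup>+ x. s x \<partial>lborel) \<le> (\<integral>\<^sup>+ t. (L0 t + ennreal h) * indicator {0..T} t \<partial>lborel) + ennreal (\<bar>h' - h\<bar> * T)"
      by (simp add: add_mono)
  qed
  then show ?thesis unfolding action_def L0_def .
qed

lemma phi_tri:
  fixes g :: "real \<Rightarrow> real^'d^'n::finite"
  assumes "T > 0" "abs_cont_on 0 T g" "g 0 = x" "g T = y"
  shows "phi m h x p \<le> action m h 0 T g + phi m h y p"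
  unfolding phi_def
proof (rule le_add_INF_ennreal)
  fix i assume "i \<in> {(T, g). T > 0 \<and> abs_cont_on 0 T g \<and> g 0 = y \<and> g T = p}"
  then obtain T2 g2 where i: "i = (T2, g2)" "T2 > 0" "abs_cont_on 0 T2 g2" "g2 0 = y" "g2 T2 = p" by auto
  define G where "G = (\<lambda>t. if t \<le> T then g t else g2 (t - T))"
  have mem: "(T + T2, G) \<in> {(T, g). T > 0 \<and> abs_cont_on 0 T g \<and> g 0 = x \<and> g T = p}"
    using abs_cont_concat[OF assms(2) i(3)] assms i by (auto simp: G_def)
  have "(INF (T, g)\<in>{(T, g). T > 0 \<and> abs_cont_on 0 T g \<and> g 0 = x \<and> g T = p}. action m h 0 T g) \<le> action m h 0 (T + T2) G"
    using INF_lower[OF mem, of "\<lambda>(T, g). action m h 0 T g"] by simp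
  also have "\<dots> \<le> action m h 0 T g + action m h 0 T2 g2"
    unfolding G_def by (rule action_concat[OF assms(1) i(2)])
  finally show "(INF (T, g)\<in>{(T, g). T > 0 \<and> abs_cont_on 0 T g \<and> g 0 = x \<and> g T = p}. action m h 0 T g)
       \<le> action m h 0 T g + (case i of (T, g) \<Rightarrow> action m h 0 T g)" using i by simp
qed


theorem lemma2p8:
  fixes m :: "'n::finite \<Rightarrow> real" and h :: real and u :: "real^'d^'n \<Rightarrow> real"
  assumes "CARD('d) \<ge> 2" and "\<forall>i. m i > 0" and "h \<ge> 0" and "u \<in> Bh m h"
  shows "\<forall>x y. ereal (u y - u x) \<le> enn2ereal (phi m h x y)"
proof (intro allI)
  fix x y :: "real^'d^'n"
  obtain hs :: "nat \<Rightarrow> real" and p :: "nat \<Rightarrow> real^'d^'n" where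
    hs0: "\<forall>n. hs n \<ge> 0" and hsl: "hs \<longlonglongrightarrow> h" and
    conv: "\<forall>K. compact K \<longrightarrow> (\<forall>e>0. \<forall>\<^sub>F n in sequentially. \<forall>x\<in>K.
          phi m (hs n) 0 (p n) \<noteq> \<infinity> \<and> phi m (hs n) x (p n) \<noteq> \<infinity> \<and>
          \<bar>enn2real (phi m (hs n) 0 (p n)) - enn2real (phi m (hs n) x (p n)) - u x\<bar> < e)"
    using assms(4) unfolding Bh_def by blast
  show "ereal (u y - u x) \<le> enn2ereal (phi m h x y)"
  proof (cases "u y - u x \<le> 0")
    case True
    then have "ereal (u y - u x) \<le> 0" by simp
    also have "0 \<le> enn2ereal (phi m h x y)" by (rule enn2ereal_nonneg)
    finally show ?thesis .
  next
    case False
    have main: "ennreal (u y - u x) \<le> phi m h x y"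
      unfolding phi_def
    proof (rule INF_greatest)
      fix i assume "i \<in> {(T, g). T > 0 \<and> abs_cont_on 0 T g \<and> g 0 = x \<and> g T = y}"
      then obtain T g where i: "i = (T, g)" "T > 0" "abs_cont_on 0 T g" "g 0 = x" "g T = y" by auto
      define A where "A = action m h 0 T g"
      have "ennreal (u y - u x) \<le> A"
      proof (cases "A = \<infinity>")
        case True then show ?thesis by simp
      next
        case Afin: False
        have key: "u y - u x \<le> enn2real A + 3 * e" if e: "e > 0" for e
        proof -
          have ev1: "\<forall>\<^sub>F n in sequentially. \<forall>z\<in>{x, y}.
              phi m (hs n) 0 (p n) \<noteq> \<infinity> \<and> phi m (hs n) z (p n) \<noteq> \<infinity> \<and>
              \<bar>enn2real (phi m (hs n) 0 (p n)) - enn2real (phi m (hs n) z (p n)) - u z\<bar> < e"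
          proof -
            have "compact {x, y}" by simp
            from conv[rule_format, OF this e] show ?thesis .
          qed
          have "\<forall>\<^sub>F n in sequentially. dist (hs n) h < e / T"
            using tendstoD[OF hsl] e i(2) by simp
          then have ev2: "\<forall>\<^sub>F n in sequentially. \<bar>hs n - h\<bar> * T < e"
            by eventually_elim (use i(2) in \<open>simp add: dist_real_def pos_less_divide_eq\<close>)
          from eventually_conj[OF ev1 ev2] obtain N where
            NN: "\<And>n. n \<ge> N \<Longrightarrow> (\<forall>z\<in>{x, y}.
              phi m (hs n) 0 (p n) \<noteq> \<infinity> \<and> phi m (hs n) z (p n) \<noteq> \<infinity> \<and>
              \<bar>enn2real (phi m (hs n) 0 (p n)) - enn2real (phi m (hs n) z (p n)) - u z\<bar> < e)
              \<and> \<bar>hs n - h\<bar> * T < e"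
            unfolding eventually_sequentially by blast
          note Nn = NN[OF order_refl]
          define a0 where "a0 = phi m (hs N) 0 (p N)"
          define bx where "bx = phi m (hs N) x (p N)"
          define bY where "bY = phi m (hs N) y (p N)"
          have fin: "bx \<noteq> \<infinity>" "bY \<noteq> \<infinity>" using Nn unfolding bx_def bY_def by auto
          have abx: "\<bar>enn2real a0 - enn2real bx - u x\<bar> < e" and aby: "\<bar>enn2real a0 - enn2real bY - u y\<bar> < e"
            and hT: "\<bar>hs N - h\<bar> * T < e"
            using Nn unfolding a0_def bx_def bY_def by auto
          have "bx \<le> action m (hs N) 0 T g + bY"
            unfolding bx_def bY_def by (rule phi_tri[OF i(2-5)])
          also have "\<dots> \<le> A + ennreal (\<bar>hs N - h\<bar> * T) + bY"
            unfolding A_def using action_h_bound[OF assms(3) hs0[rule_format, of N], of T m g] i(2)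
            by (simp add: add_right_mono)
          also have "\<dots> = ennreal (enn2real A + \<bar>hs N - h\<bar> * T + enn2real bY)"
            using Afin fin i(2) by (simp add: ennreal_plus ennreal_enn2real_if del: ennreal_plus_if)
          finally have "ennreal (enn2real bx) \<le> ennreal (enn2real A + \<bar>hs N - h\<bar> * T + enn2real bY)"
            using fin by (simp add: ennreal_enn2real_if)
          moreover have nn: "0 \<le> enn2real A + \<bar>hs N - h\<bar> * T + enn2real bY"
            using i(2) by (intro add_nonneg_nonneg mult_nonneg_nonneg) auto
          ultimately have "enn2real bx \<le> enn2real A + \<bar>hs N - h\<bar> * T + enn2real bY"
            using ennreal_le_iff[OF nn] by blast
          then show ?thesis using abx aby hT by linarith
        qed
        have "u y - u x \<le> enn2real A"
        proof (rule ccontr)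
          assume "\<not> u y - u x \<le> enn2real A"
          then have "(u y - u x - enn2real A) / 6 > 0" by simp
          from key[OF this] \<open>\<not> u y - u x \<le> enn2real A\<close> show False by (simp add: field_simps)
        qed
        then have "ennreal (u y - u x) \<le> ennreal (enn2real A)" by (rule ennreal_leI)
        then show ?thesis using Afin by (simp add: ennreal_enn2real_if)
      qed
      then show "ennreal (u y - u x) \<le> (case i of (T, g) \<Rightarrow> action m h 0 T g)" using i A_def by simp
    qed
    have "ereal (u y - u x) = enn2ereal (ennreal (u y - u x))" using False by simp
    also have "\<dots> \<le> enn2ereal (phi m h x y)" using main by (simp add: less_eq_ennreal.rep_eq)
    finally show ?thesis .
  qed
qed

end
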